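(* Let $(\mathcal G,p)$ be a CPS on the finite set $\Omega$ with $\mathcal G$ closed under unions and nonempty intersections and covering $\Omega$, and let $\widehat{\mathcal G}$ be its $1$-augmentation. Then: (i) there exists a CPS $(\widehat{\mathcal G},\widehat p)$ extending $(\mathcal G,p)$, i.e. $\widehat p_G=p_G$ for every $G\in\mathcal G$, which moreover satisfies (ii): whenever $K\in\widehat{\mathcal G}$, $L\subseteq K$ and $\widehat p_K(L)=1$, then $L\in\widehat{\mathcal G}$; (iii) for this extension, the $1$-augmentation of $(\widehat{\mathcal G},\widehat p)$ equals $\widehat{\mathcal G}$; (iv) $(\mathcal G,p)$ is $1$-closed if and only if $\widehat{\mathcal G}=\mathcal G$.
   Context: $\Omega$ is a finite set; every subset is an event. A CPS is a pair $(\mathcal G,p)$ where $\mathcal G$ is a family of nonempty subsets of $\Omega$ and $p$ assigns to each $G\in\mathcal G$ a probability measure $p_G$ on $\Omega$ with $p_G(G)=1$ and $p_G(E)=p_G(F)p_F(E)$ whenever $E\subseteq F\subseteq G$, $F,G\in\mathcal G$. For a CPS $(\mathcal G,p)$ let $\mathcal E=\{E\subseteq\Omega: p_G(E)=1 \text{ for some } G\in\mathcal G \text{ with } E\subseteq G\}$. The $1$-augmentation $\widehat{\mathcal G}$ of $(\mathcal G,p)$ is the smallest family of subsets of $\Omega$ that contains $\mathcal E$, is closed under unions and under nonempty intersections, and covers $\Omega$. $(\mathcal G,p)$ is $1$-closed if $\mathcal E=\mathcal G$. *)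

theory Defs
  imports "HOL-Probability.Probability"
begin

text \<open>A conditional probability system on the finite set Omega. Each p G is a
probability measure on Omega (given as a pmf); the values of p outside the family
are irrelevant.\<close>
definition CPS :: "'a set \<Rightarrow> 'a set set \<Rightarrow> ('a set \<Rightarrow> 'a pmf) \<Rightarrow> bool" where
  "CPS \<Omega> \<G> p \<longleftrightarrow>
     (\<forall>G\<in>\<G>. G \<noteq> {} \<and> G \<subseteq> \<Omega>) \<and>
     (\<forall>G\<in>\<G>. set_pmf (p G) \<subseteq> \<Omega>) \<and>
     (\<forall>G\<in>\<G>. measure_pmf.prob (p G) G = 1) \<and>
     (\<forall>E F G. E \<subseteq> F \<longrightarrow> F \<subseteq> G \<longrightarrow> F \<in> \<G> \<longrightarrow> G \<in> \<G> \<longrightarrow>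
        measure_pmf.prob (p G) E = measure_pmf.prob (p G) F * measure_pmf.prob (p F) E)"

definition one_events :: "'a set \<Rightarrow> 'a set set \<Rightarrow> ('a set \<Rightarrow> 'a pmf) \<Rightarrow> 'a set set" where
  "one_events \<Omega> \<G> p = {E. E \<subseteq> \<Omega> \<and> (\<exists>G\<in>\<G>. E \<subseteq> G \<and> measure_pmf.prob (p G) E = 1)}"

definition union_closed :: "'a set set \<Rightarrow> bool" where
  "union_closed \<H> \<longleftrightarrow> (\<forall>A\<in>\<H>. \<forall>B\<in>\<H>. A \<union> B \<in> \<H>)"

definition ne_inter_closed :: "'a set set \<Rightarrow> bool" where
  "ne_inter_closed \<H> \<longleftrightarrow> (\<forall>A\<in>\<H>. \<forall>B\<in>\<H>. A \<inter> B \<noteq> {} \<longrightarrow> A \<inter> B \<in> \<H>)"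

definition one_aug :: "'a set \<Rightarrow> 'a set set \<Rightarrow> ('a set \<Rightarrow> 'a pmf) \<Rightarrow> 'a set set" where
  "one_aug \<Omega> \<G> p = \<Inter>{\<H>. one_events \<Omega> \<G> p \<subseteq> \<H> \<and> union_closed \<H> \<and>
                               ne_inter_closed \<H> \<and> \<Union>\<H> = \<Omega>}"

definition one_closed :: "'a set \<Rightarrow> 'a set set \<Rightarrow> ('a set \<Rightarrow> 'a pmf) \<Rightarrow> bool" where
  "one_closed \<Omega> \<G> p \<longleftrightarrow> one_events \<Omega> \<G> p = \<G>"

end

theory Submission
  imports Defs
begin

lemma measure_cond:
  assumes "set_pmf p \<inter> s \<noteq> {}"
  shows "measure_pmf.prob (cond_pmf p s) A = measure_pmf.prob p (A \<inter> s) / measure_pmf.prob p s"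
  using assms by (simp add: cond_pmf.rep_eq measure_uniform_measure emeasure_measure_pmf_not_zero Int_commute)

lemma set_pmf_sub:
  assumes "measure_pmf.prob M A = 1" shows "set_pmf M \<subseteq> A"
  using assms by (subst (asm) measure_pmf.prob_eq_1) (auto simp: AE_measure_pmf_iff)

lemma set_pmf_one:
  assumes "set_pmf M \<subseteq> A" shows "measure_pmf.prob M A = 1"
  using assms by (subst measure_pmf.prob_eq_1) (auto simp: AE_measure_pmf_iff)

lemma prob_restrict:
  assumes "set_pmf M \<subseteq> G"
  shows "measure_pmf.prob M (A \<inter> G) = measure_pmf.prob M A"
proof -
  have "measure_pmf.prob M (A \<inter> G) = measure_pmf.prob M (A \<inter> G \<inter> set_pmf M)"
    by (simp add: measure_Int_set_pmf)
  also have "A \<inter> G \<inter> set_pmf M = A \<inter> set_pmf M" using assms by blast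
  also have "measure_pmf.prob M \<dots> = measure_pmf.prob M A" by (simp add: measure_Int_set_pmf)
  finally show ?thesis .
qed

lemma one_aug_least:
  "one_events \<Omega> \<G> p \<subseteq> H \<Longrightarrow> union_closed H \<Longrightarrow> ne_inter_closed H \<Longrightarrow> \<Union>H = \<Omega>
   \<Longrightarrow> one_aug \<Omega> \<G> p \<subseteq> H"
  unfolding one_aug_def by (rule Inter_lower) auto

lemma one_aug_ev: "one_events \<Omega> \<G> p \<subseteq> one_aug \<Omega> \<G> p"
  unfolding one_aug_def by auto

lemma one_aug_uc: "union_closed (one_aug \<Omega> \<G> p)"
  unfolding union_closed_def
proof (intro ballI)
  fix A B assume A: "A \<in> one_aug \<Omega> \<G> p" and B: "B \<in> one_aug \<Omega> \<G> p"
  show "A \<union> B \<in> one_aug \<Omega> \<G> p" unfolding one_aug_def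
  proof (rule InterI)
    fix H assume H: "H \<in> {\<H>. one_events \<Omega> \<G> p \<subseteq> \<H> \<and> union_closed \<H> \<and> ne_inter_closed \<H> \<and> \<Union>\<H> = \<Omega>}"
    have "A \<in> H" "B \<in> H" using A B H unfolding one_aug_def by (blast, blast)
    then show "A \<union> B \<in> H" using H unfolding union_closed_def by blast
  qed
qed
lemma one_aug_ic: "ne_inter_closed (one_aug \<Omega> \<G> p)"
  unfolding ne_inter_closed_def
proof (intro ballI impI)
  fix A B assume A: "A \<in> one_aug \<Omega> \<G> p" and B: "B \<in> one_aug \<Omega> \<G> p" and ne: "A \<inter> B \<noteq> {}"
  show "A \<inter> B \<in> one_aug \<Omega> \<G> p" unfolding one_aug_def
  proof (rule InterI)
    fix H assume H: "H \<in> {\<H>. one_events \<Omega> \<G> p \<subseteq> \<H> \<and> union_closed \<H> \<and> ne_inter_closed \<H> \<and> \<Union>\<H> = \<Omega>}"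
    have "A \<in> H" "B \<in> H" using A B H unfolding one_aug_def by (blast, blast)
    then show "A \<inter> B \<in> H" using H ne unfolding ne_inter_closed_def by blast
  qed
qed
lemma fin_union:
  assumes "union_closed H" "finite A" "A \<noteq> {}" "A \<subseteq> H"
  shows "\<Union>A \<in> H"
  using assms(2,3,4)
proof (induction A rule: finite_ne_induct)
  case (singleton x) then show ?case by simp
next
  case (insert x F) then show ?case using assms(1) unfolding union_closed_def by simp
qed

lemma fin_inter:
  assumes "ne_inter_closed H" "finite A" "A \<noteq> {}" "A \<subseteq> H"
  shows "\<Inter>A \<noteq> {} \<Longrightarrow> \<Inter>A \<in> H"
  using assms(2,3,4)
proof (induction A rule: finite_ne_induct)
  case (singleton x) then show ?case by simp
next
  case (insert x F)
  then have "\<Inter>F \<noteq> {}" by auto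
  with insert have "\<Inter>F \<in> H" by simp
  then show ?case using insert assms(1) unfolding ne_inter_closed_def by simp
qed

locale cps_setup =
  fixes \<Omega> :: "'a set" and \<G> :: "'a set set" and p :: "'a set \<Rightarrow> 'a pmf"
  assumes fin: "finite \<Omega>" and cps: "CPS \<Omega> \<G> p"
    and uc: "union_closed \<G>" and ic: "ne_inter_closed \<G>" and cov: "\<Union>\<G> = \<Omega>"
begin

lemma cps1: "\<forall>G\<in>\<G>. G \<noteq> {} \<and> G \<subseteq> \<Omega>"
  using cps[unfolded CPS_def] by (rule conjunct1)
lemma cps3: "\<forall>G\<in>\<G>. measure_pmf.prob (p G) G = 1"
  using cps[unfolded CPS_def, THEN conjunct2, THEN conjunct2] by (rule conjunct1)
lemma cps4: "\<forall>E F G. E \<subseteq> F \<longrightarrow> F \<subseteq> G \<longrightarrow> F \<in> \<G> \<longrightarrow> G \<in> \<G> \<longrightarrow>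
        measure_pmf.prob (p G) E = measure_pmf.prob (p G) F * measure_pmf.prob (p F) E"
  using cps[unfolded CPS_def, THEN conjunct2, THEN conjunct2] by (rule conjunct2)
lemma G_sub: "G \<in> \<G> \<Longrightarrow> G \<subseteq> \<Omega>" using cps1 by simp
lemma G_one: "G \<in> \<G> \<Longrightarrow> measure_pmf.prob (p G) G = 1" using cps3 by simp
lemma G_set: "G \<in> \<G> \<Longrightarrow> set_pmf (p G) \<subseteq> G" by (rule set_pmf_sub[OF G_one])
lemma chain:
  assumes "E \<subseteq> F" "F \<subseteq> G" "F \<in> \<G>" "G \<in> \<G>"
  shows "measure_pmf.prob (p G) E = measure_pmf.prob (p G) F * measure_pmf.prob (p F) E"
  by (rule cps4[rule_format, OF assms])
lemma G_restrict: "G \<in> \<G> \<Longrightarrow> measure_pmf.prob (p G) (A \<inter> G) = measure_pmf.prob (p G) A"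
  by (rule prob_restrict[OF G_set])
lemma fin_G: "finite \<G>"
proof -
  have "\<G> \<subseteq> Pow \<Omega>" using G_sub by blast
  then show ?thesis by (rule finite_subset) (simp add: fin)
qed

definition Apos :: "'a set \<Rightarrow> 'a set set" where
  "Apos K = {G\<in>\<G>. 0 < measure_pmf.prob (p G) K}"
definition gs :: "'a set \<Rightarrow> 'a set" where
  "gs K = \<Union>(Apos K)"
definition q :: "'a set \<Rightarrow> 'a pmf" where
  "q K = (if Apos K = {} then pmf_of_set K else cond_pmf (p (gs K)) K)"

lemma Apos_up:
  assumes "A \<in> Apos K" "B \<in> \<G>" "A \<subseteq> B" "0 < measure_pmf.prob (p B) A"
  shows "B \<in> Apos K"
proof -
  have A: "A \<in> \<G>" "0 < measure_pmf.prob (p A) K" using assms(1) unfolding Apos_def by auto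
  have "measure_pmf.prob (p B) (K \<inter> A) = measure_pmf.prob (p B) A * measure_pmf.prob (p A) (K \<inter> A)"
    using chain[of "K \<inter> A" A B] A assms by auto
  also have "measure_pmf.prob (p A) (K \<inter> A) = measure_pmf.prob (p A) K" using G_restrict A by blast
  finally have "0 < measure_pmf.prob (p B) (K \<inter> A)" using A assms by simp
  also have "\<dots> \<le> measure_pmf.prob (p B) K" by (rule measure_pmf.finite_measure_mono) auto
  finally show ?thesis using assms unfolding Apos_def by auto
qed

lemma Apos_union:
  assumes "G1 \<in> Apos K" "G2 \<in> Apos K" shows "G1 \<union> G2 \<in> Apos K"
proof -
  have g: "G1 \<in> \<G>" "G2 \<in> \<G>" using assms unfolding Apos_def by auto
  then have G: "G1 \<union> G2 \<in> \<G>" using uc unfolding union_closed_def by blast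
  have "1 = measure_pmf.prob (p (G1 \<union> G2)) (G1 \<union> G2)" using G_one G by simp
  also have "\<dots> \<le> measure_pmf.prob (p (G1 \<union> G2)) G1 + measure_pmf.prob (p (G1 \<union> G2)) G2"
    by (rule measure_Un_le) auto
  finally have "0 < measure_pmf.prob (p (G1 \<union> G2)) G1 \<or> 0 < measure_pmf.prob (p (G1 \<union> G2)) G2"
    by (smt (verit) measure_nonneg)
  then show ?thesis
  proof
    assume h: "0 < measure_pmf.prob (p (G1 \<union> G2)) G1"
    show ?thesis by (rule Apos_up[OF assms(1) G Un_upper1 h])
  next
    assume h: "0 < measure_pmf.prob (p (G1 \<union> G2)) G2"
    show ?thesis by (rule Apos_up[OF assms(2) G Un_upper2 h])
  qed
qed

lemma Apos_fin: "finite (Apos K)"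
  using fin_G unfolding Apos_def by simp

lemma gs_in: "Apos K \<noteq> {} \<Longrightarrow> gs K \<in> Apos K"
proof -
  assume a: "Apos K \<noteq> {}"
  have "union_closed (Apos K)" unfolding union_closed_def using Apos_union by blast
  then show ?thesis unfolding gs_def using fin_union[of "Apos K" "Apos K"] Apos_fin a by blast
qed

lemma gs_G: "Apos K \<noteq> {} \<Longrightarrow> gs K \<in> \<G>"
  using gs_in unfolding Apos_def by blast

lemma gs_pos: "Apos K \<noteq> {} \<Longrightarrow> 0 < measure_pmf.prob (p (gs K)) K"
  using gs_in unfolding Apos_def by blast

lemma gs_max: "G \<in> Apos K \<Longrightarrow> G \<subseteq> gs K"
  unfolding gs_def by blast

lemma Apos_mono: assumes "F \<subseteq> K" shows "Apos F \<subseteq> Apos K"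
proof
  fix G assume "G \<in> Apos F"
  then have G: "G \<in> \<G>" "0 < measure_pmf.prob (p G) F" unfolding Apos_def by auto
  have "measure_pmf.prob (p G) F \<le> measure_pmf.prob (p G) K"
    by (rule measure_pmf.finite_measure_mono) (use assms in auto)
  then show "G \<in> Apos K" using G unfolding Apos_def by simp
qed

lemma gs_meet: "Apos K \<noteq> {} \<Longrightarrow> set_pmf (p (gs K)) \<inter> K \<noteq> {}"
proof -
  assume a: "Apos K \<noteq> {}"
  show ?thesis using gs_pos[OF a] measure_pmf_zero_iff[of "p (gs K)" K] by (simp add: Int_commute)
qed

lemma q_pos_eq: "Apos K \<noteq> {} \<Longrightarrow> q K = cond_pmf (p (gs K)) K"
  unfolding q_def by simp

lemma q_pos_meas: assumes a: "Apos K \<noteq> {}"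
  shows "measure_pmf.prob (q K) A = measure_pmf.prob (p (gs K)) (A \<inter> K) / measure_pmf.prob (p (gs K)) K"
  unfolding q_pos_eq[OF a] by (rule measure_cond[OF gs_meet[OF a]])

lemma q_pos_set: assumes a: "Apos K \<noteq> {}" shows "set_pmf (q K) = set_pmf (p (gs K)) \<inter> K"
  unfolding q_pos_eq[OF a] by (rule set_cond_pmf[OF gs_meet[OF a]])

lemma q_zero_eq: "Apos K = {} \<Longrightarrow> q K = pmf_of_set K"
  unfolding q_def by simp

lemma q_zero_meas: assumes a: "Apos K = {}" "K \<noteq> {}" "K \<subseteq> \<Omega>"
  shows "measure_pmf.prob (q K) A = card (K \<inter> A) / card K"
proof -
  have "finite K" using a fin finite_subset by blast
  then show ?thesis unfolding q_zero_eq[OF a(1)] by (rule measure_pmf_of_set[OF a(2)])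
qed

lemma q_zero_set: assumes a: "Apos K = {}" "K \<noteq> {}" "K \<subseteq> \<Omega>"
  shows "set_pmf (q K) = K"
proof -
  have "finite K" using a fin finite_subset by blast
  then show ?thesis unfolding q_zero_eq[OF a(1)] by (rule set_pmf_of_set[OF a(2)])
qed

lemma q_set: assumes "K \<noteq> {}" "K \<subseteq> \<Omega>" shows "set_pmf (q K) \<subseteq> K"
proof (cases "Apos K = {}")
  case True then show ?thesis using q_zero_set[OF True assms] by simp
next
  case False then show ?thesis using q_pos_set[OF False] by simp
qed

lemma q_one: "K \<noteq> {} \<Longrightarrow> K \<subseteq> \<Omega> \<Longrightarrow> measure_pmf.prob (q K) K = 1"
  by (rule set_pmf_one[OF q_set])

lemma q_chain:
  assumes EF: "E \<subseteq> F" and FK: "F \<subseteq> K" and Fne: "F \<noteq> {}" and KO: "K \<subseteq> \<Omega>"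
  shows "measure_pmf.prob (q K) E = measure_pmf.prob (q K) F * measure_pmf.prob (q F) E"
proof (cases "Apos K = {}")
  case True
  then have F0: "Apos F = {}" using Apos_mono[OF FK] by blast
  have fK: "finite K" using fin KO finite_subset by blast
  then have fF: "finite F" using FK finite_subset by blast
  have Kne: "K \<noteq> {}" using Fne FK by blast
  have cF: "card F > 0" using fF Fne by (simp add: card_gt_0_iff)
  have "K \<inter> E = E" "K \<inter> F = F" "F \<inter> E = E" using EF FK by auto
  then show ?thesis using q_zero_meas[OF True Kne KO] q_zero_meas[OF F0 Fne] FK KO cF by simp
next
  case False
  define G where "G = gs K"
  have pos: "0 < measure_pmf.prob (p G) K" using gs_pos False G_def by simp
  have I: "E \<inter> K = E" "F \<inter> K = F" "E \<inter> F = E" using EF FK by auto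
  show ?thesis
  proof (cases "0 < measure_pmf.prob (p G) F")
    case True
    have GA: "G \<in> Apos F" using True gs_G[OF False] unfolding Apos_def G_def by simp
    then have AF: "Apos F \<noteq> {}" by blast
    have "gs F \<subseteq> G" using gs_max[of "gs F" K] gs_in[OF AF] Apos_mono[OF FK] G_def by blast
    moreover have "G \<subseteq> gs F" using gs_max[OF GA] .
    ultimately have gF: "gs F = G" by blast
    show ?thesis using q_pos_meas[OF False] q_pos_meas[OF AF] I gF True pos
      unfolding G_def by simp
  next
    case nF: False
    then have F0: "measure_pmf.prob (p G) F = 0" by (simp add: zero_less_measure_iff)
    have "measure_pmf.prob (p G) E \<le> measure_pmf.prob (p G) F"
      using EF by (intro measure_pmf.finite_measure_mono) auto
    then have E0: "measure_pmf.prob (p G) E = 0" using F0 by (simp add: measure_le_0_iff)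
    show ?thesis using q_pos_meas[OF False] I E0 F0 unfolding G_def by simp
  qed
qed

lemma q_ext:
  assumes G: "G \<in> \<G>" shows "q G = p G"
proof -
  have GA: "G \<in> Apos G" using G G_one unfolding Apos_def by simp
  then have A: "Apos G \<noteq> {}" by blast
  define H where "H = gs G"
  have H: "H \<in> \<G>" "G \<subseteq> H" "0 < measure_pmf.prob (p H) G"
    using gs_G[OF A] gs_max[OF GA] gs_pos[OF A] H_def by auto
  have qd: "q G = cond_pmf (p H) G" unfolding q_def H_def using A by simp
  show ?thesis
  proof (rule pmf_eqI)
    fix x
    show "pmf (q G) x = pmf (p G) x"
    proof (cases "x \<in> G")
      case True
      have "measure_pmf.prob (p H) {x} = measure_pmf.prob (p H) G * measure_pmf.prob (p G) {x}"
        using chain[of "{x}" G H] True H G by auto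
      then have "pmf (p H) x = measure_pmf.prob (p H) G * pmf (p G) x"
        by (simp add: measure_pmf_single)
      moreover have "pmf (q G) x = pmf (p H) x / measure_pmf.prob (p H) G"
        unfolding qd using True pmf_cond[OF gs_meet[OF A]] H_def by simp
      ultimately show ?thesis using H(3) by simp
    next
      case False
      then have "x \<notin> set_pmf (p G)" using G_set G by blast
      then have "pmf (p G) x = 0" by (simp add: set_pmf_iff)
      moreover have "pmf (q G) x = 0" unfolding qd using False pmf_cond[OF gs_meet[OF A]] H_def by simp
      ultimately show ?thesis by simp
    qed
  qed
qed

abbreviation "Ev \<equiv> one_events \<Omega> \<G> p"
abbreviation "Gh \<equiv> one_aug \<Omega> \<G> p"

lemma G_in_Ev: "\<G> \<subseteq> Ev"
  unfolding one_events_def using G_sub G_one by auto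

lemma Ev_ne: "E \<in> Ev \<Longrightarrow> E \<noteq> {} \<and> E \<subseteq> \<Omega>"
  unfolding one_events_def by auto

definition U :: "'a set set" where
  "U = {K. K \<noteq> {} \<and> K \<subseteq> \<Omega> \<and> (\<forall>x\<in>K. \<forall>y. y \<notin> K \<longrightarrow> (\<exists>E\<in>Ev. x \<in> E \<and> y \<notin> E))}"

lemma Gh_U: "Gh \<subseteq> U"
proof (rule one_aug_least)
  show "Ev \<subseteq> U" unfolding U_def using Ev_ne by blast
  show "union_closed U" unfolding U_def union_closed_def by blast
  show "ne_inter_closed U" unfolding U_def ne_inter_closed_def by blast
  have "\<Union>U \<subseteq> \<Omega>" unfolding U_def by blast
  moreover have "\<Union>\<G> \<subseteq> \<Union>U" using G_in_Ev \<open>Ev \<subseteq> U\<close> by blast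
  ultimately show "\<Union>U = \<Omega>" using cov by blast
qed

lemma Gh_sub: "K \<in> Gh \<Longrightarrow> K \<noteq> {} \<and> K \<subseteq> \<Omega>"
  using Gh_U unfolding U_def by blast

lemma Gh_cov: "\<Union>Gh = \<Omega>"
  using Gh_sub G_in_Ev one_aug_ev[of \<Omega> \<G> p] cov by blast

lemma Ev_fin: "finite Ev"
proof -
  have "Ev \<subseteq> Pow \<Omega>" using Ev_ne by blast
  then show ?thesis using fin finite_subset by blast
qed

lemma Gh_from_sep:
  assumes Lne: "L \<noteq> {}" and LO: "L \<subseteq> \<Omega>"
    and sep: "\<And>x y. x \<in> L \<Longrightarrow> y \<in> \<Omega> \<Longrightarrow> y \<notin> L \<Longrightarrow> \<exists>E\<in>Ev. x \<in> E \<and> y \<notin> E"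
  shows "L \<in> Gh"
proof -
  define M where "M x = \<Inter>{E\<in>Ev. x \<in> E}" for x
  have Mx: "M x \<in> Gh \<and> x \<in> M x \<and> M x \<subseteq> L" if x: "x \<in> L" for x
  proof -
    obtain G where G: "G \<in> \<G>" "x \<in> G" using x LO cov by blast
    then have GE: "G \<in> {E\<in>Ev. x \<in> E}" using G_in_Ev by blast
    have xM: "x \<in> M x" unfolding M_def by blast
    have s1: "{E\<in>Ev. x \<in> E} \<subseteq> Gh" using one_aug_ev by blast
    have s2: "finite {E\<in>Ev. x \<in> E}" using Ev_fin by simp
    have s3: "{E\<in>Ev. x \<in> E} \<noteq> {}" using GE by blast
    have "M x \<in> Gh" unfolding M_def
      using fin_inter[OF one_aug_ic s2 s3 s1] xM unfolding M_def by blast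
    moreover have "M x \<subseteq> L"
    proof
      fix z assume z: "z \<in> M x"
      then have "z \<in> G" using GE unfolding M_def by blast
      then have "z \<in> \<Omega>" using G G_sub by blast
      show "z \<in> L"
      proof (rule ccontr)
        assume "z \<notin> L"
        then obtain E where "E \<in> Ev" "x \<in> E" "z \<notin> E" using sep x \<open>z \<in> \<Omega>\<close> by blast
        then show False using z unfolding M_def by blast
      qed
    qed
    ultimately show ?thesis using xM by blast
  qed
  have "L = \<Union>(M ` L)" using Mx by blast
  moreover have "\<Union>(M ` L) \<in> Gh"
    using fin_union[OF one_aug_uc, of "M ` L"] Mx Lne LO fin finite_subset by blast
  ultimately show ?thesis by simp
qed

lemma cps_q: "CPS \<Omega> Gh q"
  unfolding CPS_def
proof (intro conjI allI impI ballI)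
  fix G assume "G \<in> Gh"
  then have G: "G \<noteq> {}" "G \<subseteq> \<Omega>" using Gh_sub by auto
  show "G \<noteq> {}" "G \<subseteq> \<Omega>" using G by auto
  show "set_pmf (q G) \<subseteq> \<Omega>" using q_set G by blast
  show "measure_pmf.prob (q G) G = 1" using q_one G by blast
next
  fix E F G assume "E \<subseteq> F" "F \<subseteq> G" "F \<in> Gh" "G \<in> Gh"
  then show "measure_pmf.prob (q G) E = measure_pmf.prob (q G) F * measure_pmf.prob (q F) E"
    using q_chain Gh_sub by blast
qed

lemma prop_ii:
  assumes K: "K \<in> Gh" and LK: "L \<subseteq> K" and L1: "measure_pmf.prob (q K) L = 1"
  shows "L \<in> Gh"
proof -
  have sL: "set_pmf (q K) \<subseteq> L" by (rule set_pmf_sub[OF L1])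
  have KU: "K \<in> U" using K Gh_U by blast
  have KO: "K \<noteq> {}" "K \<subseteq> \<Omega>" using Gh_sub K by auto
  have Lne: "L \<noteq> {}" using sL set_pmf_not_empty[of "q K"] by blast
  show ?thesis
  proof (rule Gh_from_sep[OF Lne])
    show "L \<subseteq> \<Omega>" using LK KO by blast
  next
    fix x y assume x: "x \<in> L" and y: "y \<in> \<Omega>" "y \<notin> L"
    show "\<exists>E\<in>Ev. x \<in> E \<and> y \<notin> E"
    proof (cases "y \<in> K")
      case False
      have "\<forall>x\<in>K. \<forall>y. y \<notin> K \<longrightarrow> (\<exists>E\<in>Ev. x \<in> E \<and> y \<notin> E)"
        using KU unfolding U_def by simp
      moreover have "x \<in> K" using x LK by blast
      ultimately show ?thesis using False by blast
    next
      case yK: True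
      show ?thesis
      proof (rule ccontr)
        assume nE: "\<not> (\<exists>E\<in>Ev. x \<in> E \<and> y \<notin> E)"
        have allG: "y \<in> set_pmf (p G)" if G: "G \<in> \<G>" "x \<in> G" for G
        proof (rule ccontr)
          assume "y \<notin> set_pmf (p G)"
          then have "set_pmf (p G) \<subseteq> G - {y}" using G_set G by blast
          then have h1: "measure_pmf.prob (p G) (G - {y}) = 1" by (rule set_pmf_one)
          have h2: "G - {y} \<subseteq> \<Omega>" using G_sub[OF G(1)] by blast
          have h3: "G - {y} \<subseteq> G" by blast
          have "\<exists>G'\<in>\<G>. G - {y} \<subseteq> G' \<and> measure_pmf.prob (p G') (G - {y}) = 1"
            using G(1) h1 h3 by (intro bexI[of _ G] conjI)
          then have Ev1: "G - {y} \<in> Ev" unfolding one_events_def using h2 by simp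
          have x1: "x \<in> G - {y}" using G(2) x y(2) by blast
          have y1: "y \<notin> G - {y}" by simp
          have "\<exists>E\<in>Ev. x \<in> E \<and> y \<notin> E"
            using Ev1 x1 y1 by (intro bexI[of _ "G - {y}"] conjI)
          with nE show False by (rule notE)
        qed
        have "x \<in> \<Union>\<G>" using x LK KO cov by blast
        then obtain G0 where G0: "G0 \<in> \<G>" "x \<in> G0" by blast
        have "0 < measure_pmf.prob (p G0) K"
          by (rule measure_pmf_posI[OF allG[OF G0] yK])
        then have G0A: "G0 \<in> Apos K" using G0 unfolding Apos_def by simp
        then have A: "Apos K \<noteq> {}" by blast
        have "x \<in> gs K" using gs_max[OF G0A] G0 by blast
        then have "y \<in> set_pmf (p (gs K))" by (rule allG[OF gs_G[OF A]])
        then have "y \<in> set_pmf (q K)" using q_pos_set[OF A] yK by blast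
        then show False using sL y by blast
      qed
    qed
  qed
qed

lemma prop_iii: "one_aug \<Omega> Gh q = Gh"
proof
  have E1: "one_events \<Omega> Gh q \<subseteq> Gh"
  proof
    fix E assume "E \<in> one_events \<Omega> Gh q"
    then have "\<exists>K\<in>Gh. E \<subseteq> K \<and> measure_pmf.prob (q K) E = 1"
      unfolding one_events_def by simp
    then obtain K where K: "K \<in> Gh" "E \<subseteq> K" "measure_pmf.prob (q K) E = 1" by blast
    show "E \<in> Gh" by (rule prop_ii[OF K])
  qed
  have E2: "Gh \<subseteq> one_events \<Omega> Gh q"
  proof
    fix K assume K: "K \<in> Gh"
    have KO: "K \<noteq> {}" "K \<subseteq> \<Omega>" using Gh_sub[OF K] by auto
    have q1: "measure_pmf.prob (q K) K = 1" by (rule q_one[OF KO])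
    have "\<exists>K'\<in>Gh. K \<subseteq> K' \<and> measure_pmf.prob (q K') K = 1"
      using K q1 by (intro bexI[of _ K] conjI) simp_all
    then show "K \<in> one_events \<Omega> Gh q" unfolding one_events_def using KO by simp
  qed
  show "one_aug \<Omega> Gh q \<subseteq> Gh"
    by (rule one_aug_least[OF E1 one_aug_uc one_aug_ic Gh_cov])
  show "Gh \<subseteq> one_aug \<Omega> Gh q" using E2 one_aug_ev[of \<Omega> Gh q] by (rule subset_trans)
qed

lemma prop_iv: "one_closed \<Omega> \<G> p \<longleftrightarrow> Gh = \<G>"
proof
  assume "one_closed \<Omega> \<G> p"
  then have E: "Ev = \<G>" unfolding one_closed_def .
  have "Gh \<subseteq> \<G>"
    by (rule one_aug_least) (simp_all add: E uc ic cov)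
  moreover have "\<G> \<subseteq> Gh" using one_aug_ev[of \<Omega> \<G> p] unfolding E .
  ultimately show "Gh = \<G>" by (rule subset_antisym)
next
  assume h: "Gh = \<G>"
  have "Ev \<subseteq> \<G>" using one_aug_ev[of \<Omega> \<G> p] unfolding h .
  then show "one_closed \<Omega> \<G> p" unfolding one_closed_def using G_in_Ev by (rule subset_antisym)
qed

end

theorem theorem3:
  fixes \<Omega> :: "'a set" and \<G> :: "'a set set" and p :: "'a set \<Rightarrow> 'a pmf"
  assumes "finite \<Omega>"
    and "CPS \<Omega> \<G> p"
    and "union_closed \<G>" and "ne_inter_closed \<G>" and "\<Union>\<G> = \<Omega>"
  shows "(\<exists>p'. CPS \<Omega> (one_aug \<Omega> \<G> p) p' \<and>
               (\<forall>G\<in>\<G>. p' G = p G) \<and>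
               (\<forall>K\<in>one_aug \<Omega> \<G> p. \<forall>L. L \<subseteq> K \<longrightarrow> measure_pmf.prob (p' K) L = 1 \<longrightarrow>
                    L \<in> one_aug \<Omega> \<G> p) \<and>
               one_aug \<Omega> (one_aug \<Omega> \<G> p) p' = one_aug \<Omega> \<G> p)
       \<and> (one_closed \<Omega> \<G> p \<longleftrightarrow> one_aug \<Omega> \<G> p = \<G>)"
proof -
  interpret cps_setup \<Omega> \<G> p using assms by unfold_locales
  have 1: "CPS \<Omega> (one_aug \<Omega> \<G> p) q" by (rule cps_q)
  have 2: "\<forall>G\<in>\<G>. q G = p G" by (intro ballI) (rule q_ext)
  have 3: "\<forall>K\<in>one_aug \<Omega> \<G> p. \<forall>L. L \<subseteq> K \<longrightarrow> measure_pmf.prob (q K) L = 1 \<longrightarrow>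
                    L \<in> one_aug \<Omega> \<G> p"
    by (intro ballI allI impI) (rule prop_ii)
  have 4: "one_aug \<Omega> (one_aug \<Omega> \<G> p) q = one_aug \<Omega> \<G> p" by (rule prop_iii)
  have 5: "one_closed \<Omega> \<G> p \<longleftrightarrow> one_aug \<Omega> \<G> p = \<G>" by (rule prop_iv)
  show ?thesis using 1 2 3 4 5 by (intro conjI exI[of _ q])
qed

end
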